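(* Let $m\ge2$ and $z_0,\dots,z_{m-1}\in\mathbb C\setminus\{0\}$ with $z_i/z_j\notin\mathbb R$ for $i\ne j$. Then $$\Omega=\Big\{z\in\mathbb C:\sum_{j=0}^{m-1}|z\wedge z_j|\le1\Big\}$$ is a convex, centrally symmetric $2m$-gon with vertices at $\pm\tau_jz_j$, $j=0,\dots,m-1$, where $$\tau_j=\Big(\sum_{i=0,\,i\ne j}^{m-1}|z_j\wedge z_i|\Big)^{-1}.$$
   Context: For $z,w\in\mathbb C$, $|z\wedge w|$ denotes the area of the parallelogram spanned by $z$ and $w$, i.e. $|\operatorname{Im}(\bar z w)|$. *)

theory Defs
  imports "HOL-Analysis.Analysis"
begin

definition wedge_area :: "complex \<Rightarrow> complex \<Rightarrow> real" where
  "wedge_area z w = \<bar>Im (cnj z * w)\<bar>"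

end

theory Submission
  imports Defs
begin

definition cr :: "complex \<Rightarrow> complex \<Rightarrow> real" where
  "cr w v = Re w * Im v - Im w * Re v"

lemma wedge_cr: "wedge_area w v = \<bar>cr w v\<bar>"
  by (simp add: wedge_area_def cr_def algebra_simps)

lemma cr_add: "cr (a + b) v = cr a v + cr b v" by (simp add: cr_def algebra_simps)
lemma cr_diff: "cr (a - b) v = cr a v - cr b v" by (simp add: cr_def algebra_simps)
lemma cr_minus: "cr (- a) v = - cr a v" by (simp add: cr_def algebra_simps)
lemma cr_scale: "cr (of_real c * a) v = c * cr a v" by (simp add: cr_def algebra_simps)
lemma cr_scaleR: "cr (c *\<^sub>R a) v = c * cr a v" by (simp add: cr_def algebra_simps scaleR_conv_of_real)
lemma cr_self: "cr v v = 0" by (simp add: cr_def algebra_simps)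
lemma cr_swap: "cr v w = - cr w v" by (simp add: cr_def algebra_simps)

lemma cr_zero_imp:
  assumes "v \<noteq> 0" "cr v w = 0"
  shows "\<exists>c. w = of_real c * v"
proof -
  have pos: "(Re v)\<^sup>2 + (Im v)\<^sup>2 > 0" using assms(1) complex_neq_0 by blast
  define c where "c = (Re v * Re w + Im v * Im w) / ((Re v)\<^sup>2 + (Im v)\<^sup>2)"
  have e: "Re v * Im w = Im v * Re w" using assms(2) by (simp add: cr_def)
  have h1: "Re w * ((Re v)\<^sup>2 + (Im v)\<^sup>2) = (Re v * Re w + Im v * Im w) * Re v"
    using e by algebra
  have h2: "Im w * ((Re v)\<^sup>2 + (Im v)\<^sup>2) = (Re v * Re w + Im v * Im w) * Im v"
    using e by algebra
  have dn: "(Re v)\<^sup>2 + (Im v)\<^sup>2 \<noteq> 0" using pos by linarith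
  have "c * Re v = (Re w * ((Re v)\<^sup>2 + (Im v)\<^sup>2)) / ((Re v)\<^sup>2 + (Im v)\<^sup>2)"
    unfolding c_def h1 by simp
  hence "Re w = c * Re v" using dn by auto
  moreover have "c * Im v = (Im w * ((Re v)\<^sup>2 + (Im v)\<^sup>2)) / ((Re v)\<^sup>2 + (Im v)\<^sup>2)"
    unfolding c_def h2 by simp
  hence "Im w = c * Im v" using dn by auto
  ultimately show ?thesis by (intro exI[of _ c]) (simp add: complex_eq_iff)
qed

lemma tri2: "u \<ge> 0 \<Longrightarrow> v \<ge> 0 \<Longrightarrow> \<bar>u * x + v * (y::real)\<bar> \<le> u * \<bar>x\<bar> + v * \<bar>y\<bar>"
  by (metis abs_mult abs_of_nonneg abs_triangle_ineq)

lemma abs_lem: "\<bar>b\<bar> < \<bar>a::real\<bar> \<Longrightarrow> \<bar>a + b\<bar> = \<bar>a\<bar> + sgn a * b"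
  by (cases "a > 0"; cases "a < 0") (auto simp: abs_if sgn_if split: if_split_asm)

lemma real_lem:
  fixes \<alpha> \<beta> c u :: real
  assumes "\<bar>\<alpha>\<bar> \<le> \<bar>c\<bar>" "\<bar>\<beta>\<bar> \<le> \<bar>c\<bar>" "c = (1-u)*\<alpha> + u*\<beta>" "0 < u" "u < 1"
  shows "\<alpha> = c \<and> \<beta> = c"
proof (cases "c \<ge> 0")
  case True
  have "(1-u)*(c-\<alpha>) \<ge> 0" "u*(c-\<beta>) \<ge> 0" using assms True by auto
  moreover have "(1-u)*(c-\<alpha>) + u*(c-\<beta>) = 0" using assms(3) by (simp add: algebra_simps)
  ultimately have "(1-u)*(c-\<alpha>) = 0" "u*(c-\<beta>) = 0" by linarith+
  then show ?thesis using assms by auto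
next
  case False
  have "(1-u)*(\<alpha>-c) \<ge> 0" "u*(\<beta>-c) \<ge> 0" using assms False by auto
  moreover have "(1-u)*(\<alpha>-c) + u*(\<beta>-c) = 0" using assms(3) by (simp add: algebra_simps)
  ultimately have "(1-u)*(\<alpha>-c) = 0" "u*(\<beta>-c) = 0" by linarith+
  then show ?thesis using assms by auto
qed


theorem lemma4p10:
  fixes m :: nat and z :: "nat \<Rightarrow> complex"
  assumes "m \<ge> 2"
    and "\<forall>j<m. z j \<noteq> 0"
    and "\<forall>i<m. \<forall>j<m. i \<noteq> j \<longrightarrow> z i / z j \<notin> \<real>"
  shows "let \<Omega> = {w. (\<Sum>j<m. wedge_area w (z j)) \<le> 1};
             \<tau> = (\<lambda>j. inverse (\<Sum>i\<in>{..<m} - {j}. wedge_area (z j) (z i)));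
             V = (\<lambda>j. complex_of_real (\<tau> j) * z j) ` {..<m}
                 \<union> (\<lambda>j. - (complex_of_real (\<tau> j) * z j)) ` {..<m}
         in convex \<Omega> \<and> (\<forall>w\<in>\<Omega>. - w \<in> \<Omega>)
            \<and> card V = 2 * m
            \<and> \<Omega> = convex hull V
            \<and> {v. v extreme_point_of \<Omega>} = V"
proof -
  define F where "F w = (\<Sum>j<m. wedge_area w (z j))" for w
  define S where "S j = (\<Sum>i\<in>{..<m} - {j}. wedge_area (z j) (z i))" for j
  define \<tau> where "\<tau> j = inverse (S j)" for j
  define \<Omega> where "\<Omega> = {w. F w \<le> 1}"
  define V where "V = (\<lambda>j. complex_of_real (\<tau> j) * z j) ` {..<m}
                 \<union> (\<lambda>j. - (complex_of_real (\<tau> j) * z j)) ` {..<m}"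
  have zne: "z j \<noteq> 0" if "j < m" for j using assms(2) that by blast
  have crne: "cr (z j) (z i) \<noteq> 0" if ij: "i<m" "j<m" "i\<noteq>j" for i j
  proof
    assume "cr (z j) (z i) = 0"
    then obtain c where "z i = of_real c * z j" using cr_zero_imp[OF zne[OF ij(2)]] by blast
    hence "z i / z j = of_real c" using zne ij by simp
    hence "z i / z j \<in> \<real>" by simp
    thus False using assms(3) ij by blast
  qed
  have Spos: "S j > 0" if "j<m" for j
  proof -
    define i where "i = (if j = 0 then 1 else (0::nat))"
    have i: "i<m" "i\<noteq>j" using assms(1) that by (auto simp: i_def)
    have "wedge_area (z j) (z i) > 0" using crne[OF i(1) that i(2)] by (simp add: wedge_cr)
    moreover have "wedge_area (z j) (z i) \<le> S j" unfolding S_def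
      by (rule member_le_sum) (use i in \<open>auto simp: wedge_area_def\<close>)
    ultimately show ?thesis by linarith
  qed
  have taupos: "\<tau> j > 0" if "j<m" for j using Spos[OF that] by (simp add: \<tau>_def)
  have Fscale: "F (of_real c * z k) = \<bar>c\<bar> * S k" if "k<m" for c k
  proof -
    have "F (of_real c * z k) = (\<Sum>j<m. \<bar>c\<bar> * wedge_area (z k) (z j))"
      unfolding F_def by (simp add: wedge_cr cr_scale abs_mult)
    also have "\<dots> = \<bar>c\<bar> * (\<Sum>j<m. wedge_area (z k) (z j))" by (simp add: sum_distrib_left)
    also have "(\<Sum>j<m. wedge_area (z k) (z j)) = S k"
      using sum.remove[of "{..<m}" k "\<lambda>j. wedge_area (z k) (z j)"] that
      by (simp add: S_def wedge_cr cr_self)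
    finally show ?thesis .
  qed
  have Fsplit: "F w = \<bar>cr w (z k)\<bar> + (\<Sum>j\<in>{..<m}-{k}. \<bar>cr w (z j)\<bar>)" if "k<m" for w k
    unfolding F_def wedge_cr using sum.remove[of "{..<m}" k] that by simp
  have Fconv: "F (u *\<^sub>R a + v *\<^sub>R b) \<le> u * F a + v * F b" if "u \<ge> 0" "v \<ge> 0" for u v a b
  proof -
    have "F (u *\<^sub>R a + v *\<^sub>R b) \<le> (\<Sum>j<m. u * \<bar>cr a (z j)\<bar> + v * \<bar>cr b (z j)\<bar>)"
      unfolding F_def wedge_cr
      by (rule sum_mono) (use that in \<open>simp add: cr_add cr_scaleR tri2\<close>)
    also have "\<dots> = u * F a + v * F b" by (simp add: F_def wedge_cr sum.distrib sum_distrib_left)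
    finally show ?thesis .
  qed
  have Fneg: "F (- w) = F w" for w unfolding F_def wedge_cr by (simp add: cr_minus)
  have convO: "convex \<Omega>"
    unfolding convex_def \<Omega>_def
  proof (intro ballI allI impI, simp)
    fix x y :: complex and u v :: real
    assume "F x \<le> 1" "F y \<le> 1" "0 \<le> u" "0 \<le> v" "u + v = 1"
    moreover have "u * F x \<le> u" "v * F y \<le> v"
      using calculation by (simp_all add: mult_left_le)
    ultimately show "F (u *\<^sub>R x + v *\<^sub>R y) \<le> 1" using Fconv[of u v x y] by linarith
  qed
  have symO: "\<forall>w\<in>\<Omega>. - w \<in> \<Omega>" by (simp add: \<Omega>_def Fneg)
  have mid: "w \<in> open_segment (w + d) (w - d)" if "d \<noteq> 0" for w d :: complex
  proof -
    have "(w + d) - (w - d) = 2 * d" by simp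
    hence "w + d \<noteq> w - d" using that by auto
    moreover have "w = (1 - 1/2) *\<^sub>R (w + d) + (1/2) *\<^sub>R (w - d)"
      by (simp add: scaleR_conv_of_real field_simps)
    ultimately show ?thesis unfolding in_segment by (intro conjI exI[of _ "1/2"]) auto
  qed
  have ext_V: "w \<in> V" if ext: "w extreme_point_of \<Omega>" for w
  proof -
    have wO: "w \<in> \<Omega>" and noseg: "\<And>a b. a\<in>\<Omega> \<Longrightarrow> b\<in>\<Omega> \<Longrightarrow> w \<notin> open_segment a b"
      using ext by (auto simp: extreme_point_of_def)
    show "w \<in> V"
    proof (cases "\<exists>k<m. cr w (z k) = 0")
      case True
      then obtain k where k: "k<m" "cr w (z k) = 0" by blast
      obtain c where c: "w = of_real c * z k"
        using cr_zero_imp[of "z k" w] k zne by (auto simp: cr_swap[of "z k"])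
      have Fw: "F w = \<bar>c\<bar> * S k" using Fscale k c by simp
      have "F w = 1"
      proof (rule ccontr)
        assume "F w \<noteq> 1" with wO have lt: "F w < 1" by (simp add: \<Omega>_def)
        define t where "t = (1 - F w) / S k"
        have Sk: "S k > 0" using Spos k by simp
        have t: "t > 0" using lt Sk by (simp add: t_def)
        have tS: "t * S k = 1 - F w" using Sk by (simp add: t_def)
        have box: "\<bar>c + e\<bar> * S k \<le> 1" if "\<bar>e\<bar> \<le> t" for e
        proof -
          have "\<bar>c + e\<bar> * S k \<le> (\<bar>c\<bar> + t) * S k"
            using that Sk by (intro mult_right_mono) (auto simp: abs_triangle_ineq order_trans[OF abs_triangle_ineq])
          also have "\<dots> = 1" using Fw tS by (simp add: algebra_simps)
          finally show ?thesis .
        qed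
        have "\<bar>c + t\<bar> * S k \<le> 1" using box[of t] t by simp
        moreover have "\<bar>c - t\<bar> * S k \<le> 1" using box[of "-t"] t by simp
        ultimately have "w + of_real t * z k \<in> \<Omega>" "w - of_real t * z k \<in> \<Omega>"
          using Fscale[OF k(1), of "c + t"] Fscale[OF k(1), of "c - t"]
          by (simp_all add: \<Omega>_def c algebra_simps)
        moreover have "of_real t * z k \<noteq> 0" using t zne k by simp
        ultimately show False using noseg mid by blast
      qed
      hence "\<bar>c\<bar> = \<tau> k" using Fw Spos[OF k(1)] by (simp add: \<tau>_def field_simps)
      hence "c = \<tau> k \<or> c = - \<tau> k" by auto
      thus ?thesis using c k by (auto simp: V_def)
    next
      case False
      hence nz: "\<And>k. k<m \<Longrightarrow> cr w (z k) \<noteq> 0" by blast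
      define s where "s k = sgn (cr w (z k))" for k
      define A where "A = (\<Sum>k<m. s k * Im (z k))"
      define B where "B = (\<Sum>k<m. s k * Re (z k))"
      define d where "d = (if A = 0 \<and> B = 0 then 1 else Complex B A)"
      have dnz: "d \<noteq> 0" by (auto simp: d_def complex_eq_iff)
      have "(\<Sum>k<m. s k * cr d (z k)) = Re d * A - Im d * B"
        by (simp add: A_def B_def cr_def sum_distrib_left sum_subtractf algebra_simps)
      hence L: "(\<Sum>k<m. s k * cr d (z k)) = 0" by (simp add: d_def)
      define \<delta> where "\<delta> = Min ((\<lambda>k. \<bar>cr w (z k)\<bar>) ` {..<m})"
      have "0 \<in> {..<m}" using assms(1) by simp
      hence ne: "{..<m} \<noteq> {}" by blast
      have \<delta>pos: "\<delta> > 0" unfolding \<delta>_def using ne nz by (subst Min_gr_iff) auto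
      have \<delta>le: "\<delta> \<le> \<bar>cr w (z k)\<bar>" if "k<m" for k unfolding \<delta>_def using that by (intro Min_le) auto
      define Bd where "Bd = (\<Sum>k<m. \<bar>cr d (z k)\<bar>)"
      have Bd: "Bd \<ge> 0" by (simp add: Bd_def sum_nonneg)
      define t where "t = \<delta> / (Bd + 1)"
      have t: "t > 0" using \<delta>pos Bd by (simp add: t_def)
      have tBd: "t * Bd < \<delta>"
      proof -
        have "t * Bd = \<delta> * (Bd / (Bd + 1))" by (simp add: t_def)
        also have "\<dots> < \<delta>" using \<delta>pos Bd by (simp add: field_simps)
        finally show ?thesis .
      qed
      have Feq: "F (w + of_real e * d) = F w" if e: "\<bar>e\<bar> \<le> t" for e
      proof -
        have "F (w + of_real e * d) = (\<Sum>k<m. \<bar>cr w (z k)\<bar> + e * (s k * cr d (z k)))"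
          unfolding F_def wedge_cr
        proof (rule sum.cong[OF refl])
          fix k assume k: "k \<in> {..<m}"
          have "\<bar>cr d (z k)\<bar> \<le> Bd" unfolding Bd_def by (rule member_le_sum) (use k in auto)
          hence "\<bar>e\<bar> * \<bar>cr d (z k)\<bar> \<le> t * Bd" using e t by (intro mult_mono) auto
          hence "\<bar>e * cr d (z k)\<bar> < \<bar>cr w (z k)\<bar>" using tBd \<delta>le[of k] k by (simp add: abs_mult)
          from abs_lem[OF this]
          show "\<bar>cr (w + of_real e * d) (z k)\<bar> = \<bar>cr w (z k)\<bar> + e * (s k * cr d (z k))"
            unfolding cr_add cr_scale s_def by (simp add: algebra_simps)
        qed
        also have "\<dots> = F w + e * (\<Sum>k<m. s k * cr d (z k))"
          by (simp add: F_def wedge_cr sum.distrib sum_distrib_left)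
        also have "\<dots> = F w" using L by simp
        finally show ?thesis .
      qed
      have "w + of_real t * d \<in> \<Omega>" using Feq[of t] t wO by (simp add: \<Omega>_def)
      moreover have "w - of_real t * d \<in> \<Omega>" using Feq[of "-t"] t wO by (simp add: \<Omega>_def)
      moreover have "of_real t * d \<noteq> 0" using t dnz by simp
      ultimately have False using noseg mid by blast
      thus ?thesis ..
    qed
  qed
  have V_ext: "v extreme_point_of \<Omega>" if vV: "v \<in> V" for v
  proof -
    obtain j c where j: "j<m" and c: "\<bar>c\<bar> = \<tau> j" and v: "v = of_real c * z j"
    proof -
      note th = that
      from vV consider j where "j<m" "v = of_real (\<tau> j) * z j"
        | j where "j<m" "v = of_real (- \<tau> j) * z j" unfolding V_def by auto
      then show ?thesis
      proof cases
        case (1 j) thus ?thesis using th[of j "\<tau> j"] taupos[of j] by simp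
      next
        case (2 j) thus ?thesis using th[of j "- \<tau> j"] taupos[of j] by simp
      qed
    qed
    have Sj: "S j > 0" using Spos j by simp
    have Fv: "F v = 1" using Fscale[OF j, of c] v c Sj by (simp add: \<tau>_def)
    show "v extreme_point_of \<Omega>" unfolding extreme_point_of_def
    proof (intro conjI ballI)
      show "v \<in> \<Omega>" using Fv by (simp add: \<Omega>_def)
      fix a b assume a: "a \<in> \<Omega>" and b: "b \<in> \<Omega>"
      show "v \<notin> open_segment a b"
      proof
        assume "v \<in> open_segment a b"
        then obtain u where ab: "a \<noteq> b" and u: "0<u" "u<1" and vu: "v = (1-u) *\<^sub>R a + u *\<^sub>R b"
          by (auto simp: in_segment)
        have Fa: "F a \<le> 1" "F b \<le> 1" using a b by (auto simp: \<Omega>_def)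
        have "(\<Sum>k\<in>{..<m}-{j}. \<bar>cr v (z k)\<bar>) \<le> (\<Sum>k\<in>{..<m}-{j}. (1-u) * \<bar>cr a (z k)\<bar> + u * \<bar>cr b (z k)\<bar>)"
          by (rule sum_mono) (use u in \<open>simp add: vu cr_add cr_scaleR tri2\<close>)
        also have "\<dots> = (1-u) * (F a - \<bar>cr a (z j)\<bar>) + u * (F b - \<bar>cr b (z j)\<bar>)"
          using Fsplit[OF j, of a] Fsplit[OF j, of b] by (simp add: sum.distrib sum_distrib_left)
        finally have 1: "(\<Sum>k\<in>{..<m}-{j}. \<bar>cr v (z k)\<bar>) \<le> (1-u) * (F a - \<bar>cr a (z j)\<bar>) + u * (F b - \<bar>cr b (z j)\<bar>)" .
        have "cr v (z j) = 0" using v by (simp add: cr_scale cr_self)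
        hence 2: "(\<Sum>k\<in>{..<m}-{j}. \<bar>cr v (z k)\<bar>) = 1" using Fsplit[OF j, of v] Fv by simp
        have "(1-u) * F a \<le> 1-u" "u * F b \<le> u" using Fa u by (simp_all add: mult_left_le)
        hence le0: "(1-u) * \<bar>cr a (z j)\<bar> + u * \<bar>cr b (z j)\<bar> \<le> 0" using 1 2 by (simp add: algebra_simps)
        have "(1-u) * \<bar>cr a (z j)\<bar> \<ge> 0" "u * \<bar>cr b (z j)\<bar> \<ge> 0" using u by simp_all
        hence "(1-u) * \<bar>cr a (z j)\<bar> = 0" "u * \<bar>cr b (z j)\<bar> = 0" using le0 by linarith+
        hence ca: "cr a (z j) = 0" and cb: "cr b (z j) = 0" using u by auto
        obtain \<alpha> where \<alpha>: "a = of_real \<alpha> * z j"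
          using cr_zero_imp[of "z j" a] ca zne j by (auto simp: cr_swap[of "z j"])
        obtain \<beta> where \<beta>: "b = of_real \<beta> * z j"
          using cr_zero_imp[of "z j" b] cb zne j by (auto simp: cr_swap[of "z j"])
        have "\<bar>\<alpha>\<bar> * S j \<le> 1" using Fa Fscale[OF j, of \<alpha>] \<alpha> by simp
        moreover have "\<bar>c\<bar> * S j = 1" using c Sj by (simp add: \<tau>_def)
        ultimately have "\<bar>\<alpha>\<bar> * S j \<le> \<bar>c\<bar> * S j" by simp
        hence a1: "\<bar>\<alpha>\<bar> \<le> \<bar>c\<bar>" using Sj by (simp add: mult_le_cancel_right)
        have "\<bar>\<beta>\<bar> * S j \<le> 1" using Fa Fscale[OF j, of \<beta>] \<beta> by simp
        moreover have "\<bar>c\<bar> * S j = 1" using c Sj by (simp add: \<tau>_def)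
        ultimately have "\<bar>\<beta>\<bar> * S j \<le> \<bar>c\<bar> * S j" by simp
        hence b1: "\<bar>\<beta>\<bar> \<le> \<bar>c\<bar>" using Sj by (simp add: mult_le_cancel_right)
        have "of_real c * z j = of_real ((1-u)*\<alpha> + u*\<beta>) * z j"
          using v vu \<alpha> \<beta> by (simp add: scaleR_conv_of_real algebra_simps)
        hence "c = (1-u)*\<alpha> + u*\<beta>" using zne[OF j] by (metis mult_cancel_right of_real_eq_iff)
        from real_lem[OF a1 b1 this u] have "\<alpha> = \<beta>" by simp
        thus False using ab \<alpha> \<beta> by simp
      qed
    qed
  qed
  have extV: "{v. v extreme_point_of \<Omega>} = V" using ext_V V_ext by blast
  have compO: "compact \<Omega>"
  proof (rule compact_eq_bounded_closed[THEN iffD2], rule conjI)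
    have "continuous_on UNIV F" unfolding F_def wedge_area_def by (intro continuous_intros)
    thus "closed \<Omega>" unfolding \<Omega>_def by (intro closed_Collect_le continuous_intros)
  next
    have m01: "0 < m" "1 < m" using assms(1) by auto
    define D where "D = cr (z 0) (z 1)"
    have D: "D \<noteq> 0" using crne[of 1 0] m01 by (simp add: D_def)
    have "norm w \<le> (norm (z 0) + norm (z 1)) / \<bar>D\<bar>" if "w \<in> \<Omega>" for w
    proof -
      have id: "of_real D * w = of_real (cr w (z 1)) * z 0 - of_real (cr w (z 0)) * z 1"
        by (simp add: complex_eq_iff D_def cr_def algebra_simps)
      have Fw: "F w \<le> 1" using that by (simp add: \<Omega>_def)
      have s0: "0 \<le> (\<Sum>j\<in>{..<m}-{0}. \<bar>cr w (z j)\<bar>)" by (rule sum_nonneg) simp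
      have s1: "0 \<le> (\<Sum>j\<in>{..<m}-{1}. \<bar>cr w (z j)\<bar>)" by (rule sum_nonneg) simp
      have p: "\<bar>cr w (z 0)\<bar> \<le> 1" "\<bar>cr w (z 1)\<bar> \<le> 1"
        using Fsplit[OF m01(1), of w] Fsplit[OF m01(2), of w] Fw s0 s1 by linarith+
      have "\<bar>D\<bar> * norm w = norm (of_real (cr w (z 1)) * z 0 - of_real (cr w (z 0)) * z 1)"
        unfolding id[symmetric] by (simp add: norm_mult)
      also have "\<dots> \<le> norm (of_real (cr w (z 1)) * z 0) + norm (of_real (cr w (z 0)) * z 1)"
        by (rule norm_triangle_ineq4)
      also have "\<dots> = \<bar>cr w (z 1)\<bar> * norm (z 0) + \<bar>cr w (z 0)\<bar> * norm (z 1)"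
        by (simp add: norm_mult)
      also have "\<dots> \<le> 1 * norm (z 0) + 1 * norm (z 1)"
        using p by (intro add_mono mult_right_mono) auto
      finally show ?thesis using D by (simp add: field_simps)
    qed
    thus "bounded \<Omega>" unfolding bounded_iff by blast
  qed
  have hullV: "\<Omega> = convex hull V"
    using Krein_Milman_Minkowski[OF compO convO] extV by simp
  have cardV: "card V = 2 * m"
  proof -
    have inj1: "inj_on (\<lambda>j. complex_of_real (\<tau> j) * z j) {..<m}"
    proof (rule inj_onI)
      fix i j assume i: "i \<in> {..<m}" and j: "j \<in> {..<m}" and eq: "of_real (\<tau> i) * z i = of_real (\<tau> j) * z j"
      show "i = j"
      proof (rule ccontr)
        assume ij: "i \<noteq> j"
        have "\<tau> i \<noteq> 0" "z j \<noteq> 0" using taupos[of i] zne[of i] zne[of j] i j by auto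
        hence "z i / z j = of_real (\<tau> j / \<tau> i)" using eq by (simp add: field_simps)
        hence "z i / z j \<in> \<real>" by simp
        then show False using assms(3) i j ij by blast
      qed
    qed
    have inj2: "inj_on (\<lambda>j. - (complex_of_real (\<tau> j) * z j)) {..<m}"
      using inj1 by (auto simp: inj_on_def)
    have disj: "(\<lambda>j. complex_of_real (\<tau> j) * z j) ` {..<m} \<inter> (\<lambda>j. - (complex_of_real (\<tau> j) * z j)) ` {..<m} = {}"
    proof (rule ccontr)
      assume "\<not> ?thesis"
      then obtain i j where i: "i<m" and j: "j<m" and eq: "of_real (\<tau> i) * z i = - (of_real (\<tau> j) * z j)"
        by auto
      have ti: "\<tau> i \<noteq> 0" "z j \<noteq> 0" "z i \<noteq> 0" using taupos[of i] zne[of i] zne[of j] i j by auto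
      show False
      proof (cases "i = j")
        case True
        hence "of_real (\<tau> i) * z i = 0" using eq by (auto simp: eq_neg_iff_add_eq_0)
        thus False using ti by simp
      next
        case False
        have "z i / z j = of_real (- \<tau> j / \<tau> i)" using eq ti by (simp add: field_simps)
        hence "z i / z j \<in> \<real>" by simp
        then show False using assms(3) i j False by blast
      qed
    qed
    show ?thesis unfolding V_def
      by (subst card_Un_disjoint) (use disj inj1 inj2 in \<open>auto simp: card_image\<close>)
  qed
  have main: "convex \<Omega> \<and> (\<forall>w\<in>\<Omega>. - w \<in> \<Omega>) \<and> card V = 2 * m \<and> \<Omega> = convex hull V
            \<and> {v. v extreme_point_of \<Omega>} = V"
    using convO symO cardV hullV extV by blast
  show ?thesis
    unfolding Let_def S_def[symmetric] \<tau>_def[symmetric] F_def[symmetric] \<Omega>_def[symmetric] V_def[symmetric]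
    by (rule main)
qed

end
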